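(* Let $(\mathfrak{g},[\cdot,\cdot]_{\mathfrak{g}},\phi_{\mathfrak{g}})$ be a finite-dimensional weakly involutive Hom-Lie algebra and let $r\in\mathfrak g\otimes\mathfrak g$ be skew-symmetric with $r^\sharp$ invertible. Define $B(x,y)=\langle(r^\sharp)^{-1}(x),y\rangle$. Then [$\phi_{\mathfrak g}r^\sharp=r^\sharp\phi_{\mathfrak g}^*$ and $r$ is a solution of the classical Hom-Yang-Baxter equation $[r,r]_{\mathfrak g}=0$] if and only if for all $x,y,z\in\mathfrak g$: $B(\phi_{\mathfrak g}(x),[y,z]_{\mathfrak g})+B(\phi_{\mathfrak g}(y),[z,x]_{\mathfrak g})+B(\phi_{\mathfrak g}(z),[x,y]_{\mathfrak g})=0$ and $B(\phi_{\mathfrak g}(x),y)=B(x,\phi_{\mathfrak g}(y))$.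
   Context: A Hom-Lie algebra $(\mathfrak{g},[\cdot,\cdot]_{\mathfrak{g}},\phi_{\mathfrak{g}})$: skew-symmetric bilinear bracket and linear map with $\phi_{\mathfrak g}[x,y]=[\phi_{\mathfrak g}x,\phi_{\mathfrak g}y]$ and $[\phi_{\mathfrak g}(x),[y,z]]+[\phi_{\mathfrak g}(y),[z,x]]+[\phi_{\mathfrak g}(z),[x,y]]=0$; weakly involutive if $[\phi_{\mathfrak g}^2(x),y]=[x,y]$. For $r\in\mathfrak g\otimes\mathfrak g$, $r^\sharp:\mathfrak g^*\to\mathfrak g$ is defined by $\langle r^\sharp(a),b\rangle=\langle r,a\otimes b\rangle$. For $r=\sum_ix_i\otimes y_i$, $[r,r]_{\mathfrak g}=\sum_{i,j}\big([x_i,x_j]_{\mathfrak g}\otimes\phi_{\mathfrak g}(y_i)\otimes\phi_{\mathfrak g}(y_j)+\phi_{\mathfrak g}(x_i)\otimes[y_i,x_j]_{\mathfrak g}\otimes\phi_{\mathfrak g}(y_j)+\phi_{\mathfrak g}(x_i)\otimes\phi_{\mathfrak g}(x_j)\otimes[y_i,y_j]_{\mathfrak g}\big)$. *)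

theory Defs
  imports "HOL-Analysis.Analysis"
begin

text \<open>The finite-dimensional vector space g over a field 'k is modelled as 'k^'n
 for a finite index type 'n (standard basis e_i = axis i 1). The dual space g* is
 also modelled as 'k^'n via the dual basis, with the natural pairing below.
 A 2-tensor r in g (x) g is given by its coefficient matrix R: r = sum R i j e_i (x) e_j,
 and a 3-tensor by its coefficient function.\<close>

definition klinear :: "('k::field^'n \<Rightarrow> 'k^'m) \<Rightarrow> bool" where
  "klinear f \<longleftrightarrow> (\<forall>x y. f (x + y) = f x + f y) \<and> (\<forall>c x. f (c *s x) = c *s f x)"

definition kbilinear :: "('k::field^'n \<Rightarrow> 'k^'n \<Rightarrow> 'k^'n) \<Rightarrow> bool" where
  "kbilinear br \<longleftrightarrow> (\<forall>x. klinear (br x)) \<and> (\<forall>y. klinear (\<lambda>x. br x y))"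

definition hom_lie_algebra ::
  "('k::field^'n::finite \<Rightarrow> 'k^'n \<Rightarrow> 'k^'n) \<Rightarrow> ('k^'n \<Rightarrow> 'k^'n) \<Rightarrow> bool" where
  "hom_lie_algebra br \<phi> \<longleftrightarrow>
     kbilinear br \<and> klinear \<phi> \<and>
     (\<forall>x y. br x y = - br y x) \<and>
     (\<forall>x y. \<phi> (br x y) = br (\<phi> x) (\<phi> y)) \<and>
     (\<forall>x y z. br (\<phi> x) (br y z) + br (\<phi> y) (br z x) + br (\<phi> z) (br x y) = 0)"

definition weakly_involutive ::
  "('k::field^'n::finite \<Rightarrow> 'k^'n \<Rightarrow> 'k^'n) \<Rightarrow> ('k^'n \<Rightarrow> 'k^'n) \<Rightarrow> bool" where
  "weakly_involutive br \<phi> \<longleftrightarrow> (\<forall>x y. br (\<phi> (\<phi> x)) y = br x y)"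

definition pairing :: "'k::field^'n::finite \<Rightarrow> 'k^'n \<Rightarrow> 'k" where
  "pairing a x = (\<Sum>i\<in>UNIV. a $ i * x $ i)"

text \<open>Dual map phi^*: pairing (phi^* a) x = pairing a (phi x).\<close>
definition dual_map :: "('k::field^'n::finite \<Rightarrow> 'k^'n) \<Rightarrow> 'k^'n \<Rightarrow> 'k^'n" where
  "dual_map \<phi> a = (\<chi> i. pairing a (\<phi> (axis i 1)))"

text \<open>r^sharp: pairing (r^sharp a) b = <r, a (x) b> = sum R i j a_i b_j.\<close>
definition rsharp :: "('n::finite \<Rightarrow> 'n \<Rightarrow> 'k::field) \<Rightarrow> 'k^'n \<Rightarrow> 'k^'n" where
  "rsharp R a = (\<chi> j. \<Sum>i\<in>UNIV. R i j * a $ i)"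

definition skew_tensor :: "('n \<Rightarrow> 'n \<Rightarrow> 'k::field) \<Rightarrow> bool" where
  "skew_tensor R \<longleftrightarrow> (\<forall>i j. R i j = - R j i)"

text \<open>[r,r]_g with r = sum_{(i,j)} x_{ij} (x) y_{ij}, x_{ij} = R i j e_i, y_{ij} = e_j,
 as coefficient function of a 3-tensor (u (x) v (x) w has coefficients u_a v_b w_c).\<close>
definition hom_yb :: "('k::field^'n::finite \<Rightarrow> 'k^'n \<Rightarrow> 'k^'n) \<Rightarrow> ('k^'n \<Rightarrow> 'k^'n)
    \<Rightarrow> ('n \<Rightarrow> 'n \<Rightarrow> 'k) \<Rightarrow> 'n \<Rightarrow> 'n \<Rightarrow> 'n \<Rightarrow> 'k" where
  "hom_yb br \<phi> R a b c =
    (\<Sum>i\<in>UNIV. \<Sum>j\<in>UNIV. \<Sum>k\<in>UNIV. \<Sum>l\<in>UNIV.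
      (let xi = R i j *s axis i 1; yi = axis j (1::'k);
           xj = R k l *s axis k 1; yj = axis l (1::'k) in
        br xi xj $ a * \<phi> yi $ b * \<phi> yj $ c
      + \<phi> xi $ a * br yi xj $ b * \<phi> yj $ c
      + \<phi> xi $ a * \<phi> xj $ b * br yi yj $ c))"

end

theory Submission
  imports Defs
begin

lemma kl_linear: "klinear f \<Longrightarrow> Vector_Spaces.linear (*s) (*s) f"
  unfolding Vector_Spaces.linear_iff klinear_def
  by (simp add: vec.vector_space_axioms)

lemma kl_comp: "klinear f \<Longrightarrow> f x $ j = (\<Sum>i\<in>UNIV. x$i * f (axis i 1) $ j)"
  by (rule linear_componentwise[OF kl_linear])

lemma kbil_comp:
  assumes "kbilinear br"
  shows "br u v $ a = (\<Sum>i\<in>UNIV. \<Sum>k\<in>UNIV. u$i * v$k * br (axis i 1) (axis k 1) $ a)"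
proof -
  have l1: "klinear (\<lambda>x. br x v)" and l2: "\<And>x. klinear (br x)" using assms kbilinear_def by auto
  have "br u v $ a = (\<Sum>i\<in>UNIV. u$i * br (axis i 1) v $ a)" by (rule kl_comp[OF l1])
  also have "\<dots> = (\<Sum>i\<in>UNIV. u$i * (\<Sum>k\<in>UNIV. v$k * br (axis i 1) (axis k 1) $ a))"
    by (rule sum.cong[OF refl], subst kl_comp[OF l2], rule refl)
  also have "\<dots> = (\<Sum>i\<in>UNIV. \<Sum>k\<in>UNIV. u$i * v$k * br (axis i 1) (axis k 1) $ a)"
    by (simp only: sum_distrib_left mult.assoc)
  finally show ?thesis .
qed

lemma pairing_axis1: "pairing (axis i 1) u = u $ i"
proof -
  have "pairing (axis i 1) u = (\<Sum>j\<in>UNIV. if j = i then u $ j else 0)"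
    unfolding pairing_def by (rule sum.cong) (auto simp: axis_def)
  then show ?thesis by simp
qed
lemma pairing_axis2: "pairing u (axis i 1) = u $ i"
proof -
  have "pairing u (axis i 1) = (\<Sum>j\<in>UNIV. if j = i then u $ j else 0)"
    unfolding pairing_def by (rule sum.cong) (auto simp: axis_def)
  then show ?thesis by simp
qed

lemma swap3: "(\<Sum>j\<in>A. \<Sum>k\<in>B. \<Sum>i\<in>C. f j k i) = (\<Sum>i\<in>C. \<Sum>k\<in>B. \<Sum>j\<in>A. f j k i)"
proof -
  have "(\<Sum>j\<in>A. \<Sum>k\<in>B. \<Sum>i\<in>C. f j k i) = (\<Sum>j\<in>A. \<Sum>i\<in>C. \<Sum>k\<in>B. f j k i)"
    by (rule sum.cong[OF refl], rule sum.swap)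
  also have "\<dots> = (\<Sum>i\<in>C. \<Sum>j\<in>A. \<Sum>k\<in>B. f j k i)" by (rule sum.swap)
  also have "\<dots> = (\<Sum>i\<in>C. \<Sum>k\<in>B. \<Sum>j\<in>A. f j k i)" by (rule sum.cong[OF refl], rule sum.swap)
  finally show ?thesis .
qed

lemma rearr4:
  fixes R :: "'n::finite \<Rightarrow> 'n \<Rightarrow> 'k::field"
  shows "(\<Sum>i\<in>UNIV. \<Sum>j\<in>UNIV. \<Sum>k\<in>UNIV. \<Sum>l\<in>UNIV. R i j * R k l * X i k * P j * Q l)
     = (\<Sum>i\<in>UNIV. \<Sum>k\<in>UNIV. X i k * (\<Sum>j\<in>UNIV. R i j * P j) * (\<Sum>l\<in>UNIV. R k l * Q l))"
proof -
  have "(\<Sum>i\<in>UNIV. \<Sum>j\<in>UNIV. \<Sum>k\<in>UNIV. \<Sum>l\<in>UNIV. R i j * R k l * X i k * P j * Q l)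
     = (\<Sum>i\<in>UNIV. \<Sum>k\<in>UNIV. \<Sum>j\<in>UNIV. \<Sum>l\<in>UNIV. R i j * R k l * X i k * P j * Q l)"
    by (rule sum.cong[OF refl], rule sum.swap)
  also have "\<dots> = (\<Sum>i\<in>UNIV. \<Sum>k\<in>UNIV. X i k * (\<Sum>j\<in>UNIV. R i j * P j) * (\<Sum>l\<in>UNIV. R k l * Q l))"
  proof (rule sum.cong[OF refl], rule sum.cong[OF refl])
    fix i k
    have "X i k * (\<Sum>j\<in>UNIV. R i j * P j) * (\<Sum>l\<in>UNIV. R k l * Q l)
       = X i k * (\<Sum>j\<in>UNIV. \<Sum>l\<in>UNIV. (R i j * P j) * (R k l * Q l))"
      by (simp only: sum_product mult.assoc)
    also have "\<dots> = (\<Sum>j\<in>UNIV. \<Sum>l\<in>UNIV. X i k * ((R i j * P j) * (R k l * Q l)))"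
      by (simp only: sum_distrib_left)
    also have "\<dots> = (\<Sum>j\<in>UNIV. \<Sum>l\<in>UNIV. R i j * R k l * X i k * P j * Q l)"
      by (rule sum.cong[OF refl], rule sum.cong[OF refl]) (simp add: mult_ac)
    finally show "(\<Sum>j\<in>UNIV. \<Sum>l\<in>UNIV. R i j * R k l * X i k * P j * Q l) = X i k * (\<Sum>j\<in>UNIV. R i j * P j) * (\<Sum>l\<in>UNIV. R k l * Q l)" by simp
  qed
  finally show ?thesis .
qed

lemma prod3:
  fixes y :: "'k::field"
  shows "(\<Sum>i\<in>A. f i) * y * (\<Sum>l\<in>B. g l) = (\<Sum>i\<in>A. \<Sum>l\<in>B. f i * y * g l)"
  apply (simp only: sum_distrib_left sum_distrib_right)
  apply (rule sum.swap)
  done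

lemma prod3':
  fixes y :: "'k::field"
  shows "y * (\<Sum>i\<in>A. f i) * (\<Sum>l\<in>B. g l) = (\<Sum>i\<in>A. \<Sum>l\<in>B. y * f i * g l)"
  apply (simp only: sum_distrib_left sum_distrib_right mult.assoc)
  apply (rule sum.swap)
  done

lemma rearr2:
  fixes R :: "'n::finite \<Rightarrow> 'n \<Rightarrow> 'k::field"
  shows "(\<Sum>i\<in>UNIV. \<Sum>j\<in>UNIV. \<Sum>k\<in>UNIV. \<Sum>l\<in>UNIV. R i j * A i * (R k l * Y j k) * Q l)
     = (\<Sum>j\<in>UNIV. \<Sum>k\<in>UNIV. (\<Sum>i\<in>UNIV. R i j * A i) * Y j k * (\<Sum>l\<in>UNIV. R k l * Q l))"
proof -
  have "(\<Sum>i\<in>UNIV. \<Sum>j\<in>UNIV. \<Sum>k\<in>UNIV. \<Sum>l\<in>UNIV. R i j * A i * (R k l * Y j k) * Q l)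
     = (\<Sum>j\<in>UNIV. \<Sum>i\<in>UNIV. \<Sum>k\<in>UNIV. \<Sum>l\<in>UNIV. R i j * A i * (R k l * Y j k) * Q l)"
    by (rule sum.swap)
  also have "\<dots> = (\<Sum>j\<in>UNIV. \<Sum>k\<in>UNIV. \<Sum>i\<in>UNIV. \<Sum>l\<in>UNIV. R i j * A i * (R k l * Y j k) * Q l)"
    by (rule sum.cong[OF refl], rule sum.swap)
  also have "\<dots> = (\<Sum>j\<in>UNIV. \<Sum>k\<in>UNIV. (\<Sum>i\<in>UNIV. R i j * A i) * Y j k * (\<Sum>l\<in>UNIV. R k l * Q l))"
    unfolding prod3
    by (intro sum.cong refl) (simp add: mult_ac)
  finally show ?thesis .
qed

lemma rearr3:
  fixes R :: "'n::finite \<Rightarrow> 'n \<Rightarrow> 'k::field"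
  shows "(\<Sum>i\<in>UNIV. \<Sum>j\<in>UNIV. \<Sum>k\<in>UNIV. \<Sum>l\<in>UNIV. R i j * A i * (R k l * Bv k) * Z j l)
     = (\<Sum>j\<in>UNIV. \<Sum>l\<in>UNIV. Z j l * (\<Sum>i\<in>UNIV. R i j * A i) * (\<Sum>k\<in>UNIV. R k l * Bv k))"
proof -
  have "(\<Sum>i\<in>UNIV. \<Sum>j\<in>UNIV. \<Sum>k\<in>UNIV. \<Sum>l\<in>UNIV. R i j * A i * (R k l * Bv k) * Z j l)
     = (\<Sum>j\<in>UNIV. \<Sum>i\<in>UNIV. \<Sum>k\<in>UNIV. \<Sum>l\<in>UNIV. R i j * A i * (R k l * Bv k) * Z j l)"
    by (rule sum.swap)
  also have "\<dots> = (\<Sum>j\<in>UNIV. \<Sum>i\<in>UNIV. \<Sum>l\<in>UNIV. \<Sum>k\<in>UNIV. R i j * A i * (R k l * Bv k) * Z j l)"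
    by (rule sum.cong[OF refl], rule sum.cong[OF refl], rule sum.swap)
  also have "\<dots> = (\<Sum>j\<in>UNIV. \<Sum>l\<in>UNIV. \<Sum>i\<in>UNIV. \<Sum>k\<in>UNIV. R i j * A i * (R k l * Bv k) * Z j l)"
    by (rule sum.cong[OF refl], rule sum.swap)
  also have "\<dots> = (\<Sum>j\<in>UNIV. \<Sum>l\<in>UNIV. Z j l * (\<Sum>i\<in>UNIV. R i j * A i) * (\<Sum>k\<in>UNIV. R k l * Bv k))"
    unfolding prod3'
    by (intro sum.cong refl) (simp add: mult_ac)
  finally show ?thesis .
qed

lemma coef_identity:
  fixes br :: "'k::field^'n::finite \<Rightarrow> 'k^'n \<Rightarrow> 'k^'n"
    and \<phi> :: "'k^'n \<Rightarrow> 'k^'n"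
    and R :: "'n \<Rightarrow> 'n \<Rightarrow> 'k"
  assumes hl: "hom_lie_algebra br \<phi>" and sk: "skew_tensor R"
  defines "s \<equiv> \<lambda>b. rsharp R (dual_map \<phi> (axis b 1))"
  shows "hom_yb br \<phi> R a b c = br (s b) (s c) $ a - br (s a) (s c) $ b + br (s a) (s b) $ c"
proof -
  have bil: "kbilinear br" using hl[unfolded hom_lie_algebra_def] by (rule conjunct1)
  have lp: "klinear \<phi>" using hl[unfolded hom_lie_algebra_def] by (rule conjunct1[OF conjunct2])
  have phiS: "\<phi> (r *s x) = r *s \<phi> x" for r x using lp by (simp add: klinear_def)
  have brS1: "br (r *s x) y = r *s br x y" for r x y using bil by (simp add: kbilinear_def klinear_def)
  have brS2: "br x (r *s y) = r *s br x y" for r x y using bil by (simp add: kbilinear_def klinear_def)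
  have skR: "R j i = - R i j" for i j using sk unfolding skew_tensor_def by blast
  have K1: "(\<Sum>j\<in>UNIV. R i j * \<phi> (axis j 1) $ b) = - (s b $ i)" for i b
  proof -
    have "s b $ i = (\<Sum>j\<in>UNIV. R j i * \<phi> (axis j 1) $ b)"
      by (simp add: s_def rsharp_def dual_map_def pairing_axis1)
    also have "\<dots> = (\<Sum>j\<in>UNIV. - (R i j * \<phi> (axis j 1) $ b))"
      by (rule sum.cong) (simp_all add: skR[of i])
    also have "\<dots> = - (\<Sum>j\<in>UNIV. R i j * \<phi> (axis j 1) $ b)" by (simp add: sum_negf)
    finally show ?thesis by simp
  qed
  have K2: "(\<Sum>i\<in>UNIV. R i j * \<phi> (axis i 1) $ a) = s a $ j" for j a
    by (simp add: s_def rsharp_def dual_map_def pairing_axis1)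
  define X where "X = (\<lambda>i k. br (axis i 1) (axis k 1) $ a)"
  define Y where "Y = (\<lambda>i k. br (axis i 1) (axis k 1) $ b)"
  define Z where "Z = (\<lambda>i k. br (axis i 1) (axis k 1) $ c)"
  define P where "P = (\<lambda>j. \<phi> (axis j 1) $ b)"
  define Q where "Q = (\<lambda>j. \<phi> (axis j 1) $ c)"
  define A where "A = (\<lambda>j. \<phi> (axis j 1) $ a)"
  have "hom_yb br \<phi> R a b c = (\<Sum>i\<in>UNIV. \<Sum>j\<in>UNIV. \<Sum>k\<in>UNIV. \<Sum>l\<in>UNIV.
      R i j * R k l * X i k * P j * Q l + R i j * A i * (R k l * Y j k) * Q l
      + R i j * A i * (R k l * P k) * Z j l)"
    unfolding hom_yb_def Let_def
    by (intro sum.cong refl) (simp add: brS1 brS2 phiS X_def Y_def Z_def P_def Q_def A_def mult_ac)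
  also have "\<dots> = (\<Sum>i\<in>UNIV. \<Sum>j\<in>UNIV. \<Sum>k\<in>UNIV. \<Sum>l\<in>UNIV. R i j * R k l * X i k * P j * Q l)
     + (\<Sum>i\<in>UNIV. \<Sum>j\<in>UNIV. \<Sum>k\<in>UNIV. \<Sum>l\<in>UNIV. R i j * A i * (R k l * Y j k) * Q l)
     + (\<Sum>i\<in>UNIV. \<Sum>j\<in>UNIV. \<Sum>k\<in>UNIV. \<Sum>l\<in>UNIV. R i j * A i * (R k l * P k) * Z j l)"
    by (simp only: sum.distrib)
  also have "\<dots> = (\<Sum>i\<in>UNIV. \<Sum>k\<in>UNIV. X i k * (- (s b $ i)) * (- (s c $ k)))
     + (\<Sum>j\<in>UNIV. \<Sum>k\<in>UNIV. s a $ j * Y j k * (- (s c $ k)))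
     + (\<Sum>j\<in>UNIV. \<Sum>l\<in>UNIV. Z j l * s a $ j * s b $ l)"
    unfolding rearr4 rearr2 rearr3 by (simp only: P_def Q_def A_def K1 K2)
  also have "\<dots> = br (s b) (s c) $ a - br (s a) (s c) $ b + br (s a) (s b) $ c"
    unfolding kbil_comp[OF bil, of "s b" "s c" a] kbil_comp[OF bil, of "s a" "s c" b] kbil_comp[OF bil, of "s a" "s b" c]
    by (simp add: X_def Y_def Z_def sum_negf mult_ac)
  finally show ?thesis .
qed

lemma lin_zero:
  fixes g :: "'k::field^'n::finite \<Rightarrow> 'k"
  assumes add: "\<And>x y. g (x + y) = g x + g y" and sc: "\<And>r x. g (r *s x) = r * g x"
    and z: "\<And>i. g (axis i 1) = 0"
  shows "g x = 0"
proof -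
  have g0: "g 0 = 0" using sc[of 0 0] by simp
  have "g (\<Sum>i\<in>A. x$i *s axis i 1) = 0" if "finite A" for A using that
    by (induction A rule: finite_induct) (simp_all add: g0 add sc z)
  from this[of UNIV] show ?thesis by (simp add: basis_expansion)
qed

lemma pairing_eq:
  assumes "\<And>y. pairing u y = pairing v y"
  shows "u = v"
proof -
  have "u $ i = v $ i" for i using assms[of "axis i 1"] by (simp add: pairing_axis2)
  then show ?thesis by (simp add: vec_eq_iff)
qed

lemma pairing_add1: "pairing (u + v) w = pairing u w + pairing v w"
  by (simp add: pairing_def sum.distrib algebra_simps)
lemma pairing_add2: "pairing w (u + v) = pairing w u + pairing w v"
  by (simp add: pairing_def sum.distrib algebra_simps)
lemma pairing_sc1: "pairing (r *s u) w = r * pairing u w"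
  by (simp add: pairing_def sum_distrib_left algebra_simps)
lemma pairing_sc2: "pairing w (r *s u) = r * pairing w u"
  by (simp add: pairing_def sum_distrib_left algebra_simps)

lemma rsharp_add: "rsharp R (x + y) = rsharp R x + rsharp R y"
  by (simp add: rsharp_def vec_eq_iff sum.distrib algebra_simps)
lemma rsharp_sc: "rsharp R (r *s x) = r *s rsharp R x"
  by (simp add: rsharp_def vec_eq_iff sum_distrib_left algebra_simps)

lemma dual_pairing:
  assumes lp: "klinear \<phi>"
  shows "pairing (dual_map \<phi> a) x = pairing a (\<phi> x)"
proof -
  have "pairing (dual_map \<phi> a) x = (\<Sum>i\<in>UNIV. (\<Sum>j\<in>UNIV. a $ j * \<phi> (axis i 1) $ j) * x $ i)"
    by (simp add: pairing_def dual_map_def)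
  also have "\<dots> = (\<Sum>i\<in>UNIV. \<Sum>j\<in>UNIV. a $ j * (x $ i * \<phi> (axis i 1) $ j))"
    by (simp add: sum_distrib_right sum_distrib_left mult_ac)
  also have "\<dots> = (\<Sum>j\<in>UNIV. \<Sum>i\<in>UNIV. a $ j * (x $ i * \<phi> (axis i 1) $ j))"
    by (rule sum.swap)
  also have "\<dots> = (\<Sum>j\<in>UNIV. a $ j * \<phi> x $ j)"
    by (rule sum.cong[OF refl], subst kl_comp[OF lp, of x], simp add: sum_distrib_left)
  also have "\<dots> = pairing a (\<phi> x)" by (simp add: pairing_def)
  finally show ?thesis .
qed

theorem proposition4p11:
  fixes br :: "'k::field^'n::finite \<Rightarrow> 'k^'n \<Rightarrow> 'k^'n"
    and \<phi> :: "'k^'n \<Rightarrow> 'k^'n"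
    and R :: "'n \<Rightarrow> 'n \<Rightarrow> 'k"
    and B :: "'k^'n \<Rightarrow> 'k^'n \<Rightarrow> 'k"
  assumes "hom_lie_algebra br \<phi>"
    and "weakly_involutive br \<phi>"
    and "skew_tensor R"
    and "bij (rsharp R)"
    and "\<And>x y. B x y = pairing (inv (rsharp R) x) y"
  shows "((\<forall>a. \<phi> (rsharp R a) = rsharp R (dual_map \<phi> a)) \<and> (\<forall>a b c. hom_yb br \<phi> R a b c = 0))
     \<longleftrightarrow> ((\<forall>x y z. B (\<phi> x) (br y z) + B (\<phi> y) (br z x) + B (\<phi> z) (br x y) = 0)
          \<and> (\<forall>x y. B (\<phi> x) y = B x (\<phi> y)))"
proof -
  note hl = assms(1)
  have bil: "kbilinear br" using hl[unfolded hom_lie_algebra_def] by (rule conjunct1)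
  have lp: "klinear \<phi>" using hl[unfolded hom_lie_algebra_def] by (rule conjunct1[OF conjunct2])
  have anti_all: "\<forall>x y. br x y = - br y x"
    by (rule hl[unfolded hom_lie_algebra_def, THEN conjunct2, THEN conjunct2, THEN conjunct1])
  have hom_all: "\<forall>x y. \<phi> (br x y) = br (\<phi> x) (\<phi> y)"
    by (rule hl[unfolded hom_lie_algebra_def, THEN conjunct2, THEN conjunct2, THEN conjunct2, THEN conjunct1])
  have anti: "br x y = - br y x" for x y by (rule anti_all[rule_format]) 
  have hom: "\<phi> (br x y) = br (\<phi> x) (\<phi> y)" for x y by (rule hom_all[rule_format])
  have phiA: "\<phi> (x + y) = \<phi> x + \<phi> y" for x y using lp by (simp add: klinear_def)
  have phiS: "\<phi> (r *s x) = r *s \<phi> x" for r x using lp by (simp add: klinear_def)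
  have brA1: "br (x + y) z = br x z + br y z" for x y z using bil by (simp add: kbilinear_def klinear_def)
  have brA2: "br z (x + y) = br z x + br z y" for x y z using bil by (simp add: kbilinear_def klinear_def)
  have brS1: "br (r *s x) y = r *s br x y" for r x y using bil by (simp add: kbilinear_def klinear_def)
  have brS2: "br x (r *s y) = r *s br x y" for r x y using bil by (simp add: kbilinear_def klinear_def)
  define T where "T = inv (rsharp R)"
  have ST: "rsharp R (T x) = x" for x
    unfolding T_def using assms(4) by (simp add: bij_is_surj surj_f_inv_f)
  have TS: "T (rsharp R a) = a" for a
    unfolding T_def using assms(4) by (simp add: bij_is_inj inv_f_f)
  have Bd: "B x y = pairing (T x) y" for x y using assms(5) by (simp add: T_def)
  define C1 where "C1 = (\<forall>a. \<phi> (rsharp R a) = rsharp R (dual_map \<phi> a))"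
  define C2 where "C2 = (\<forall>x y. B (\<phi> x) y = B x (\<phi> y))"
  have C12: "C2" if c1: "C1"
    unfolding C2_def
  proof (intro allI)
    fix x y
    have "B (\<phi> x) y = pairing (T (\<phi> (rsharp R (T x)))) y" by (simp add: Bd ST)
    also have "\<dots> = pairing (dual_map \<phi> (T x)) y" using c1 by (simp add: C1_def TS)
    also have "\<dots> = pairing (T x) (\<phi> y)" by (rule dual_pairing[OF lp])
    also have "\<dots> = B x (\<phi> y)" by (simp add: Bd)
    finally show "B (\<phi> x) y = B x (\<phi> y)" .
  qed
  have C21: "C1" if c2: "C2"
    unfolding C1_def
  proof (intro allI)
    fix a
    have "T (\<phi> (rsharp R a)) = dual_map \<phi> a"
    proof (rule pairing_eq)
      fix y
      have "pairing (T (\<phi> (rsharp R a))) y = B (\<phi> (rsharp R a)) y" by (simp add: Bd)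
      also have "\<dots> = B (rsharp R a) (\<phi> y)" using c2 by (simp add: C2_def)
      also have "\<dots> = pairing a (\<phi> y)" by (simp add: Bd TS)
      also have "\<dots> = pairing (dual_map \<phi> a) y" by (rule dual_pairing[OF lp, symmetric])
      finally show "pairing (T (\<phi> (rsharp R a))) y = pairing (dual_map \<phi> a) y" .
    qed
    then have "rsharp R (T (\<phi> (rsharp R a))) = rsharp R (dual_map \<phi> a)" by simp
    then show "\<phi> (rsharp R a) = rsharp R (dual_map \<phi> a)" by (simp add: ST)
  qed
  define F where "F = (\<lambda>a. \<phi> (rsharp R a))"
  define G where "G = (\<lambda>a b c. pairing a (br (F b) (F c)) + pairing b (br (F c) (F a)) + pairing c (br (F a) (F b)))"
  have FA: "F (x + y) = F x + F y" for x y by (simp add: F_def rsharp_add phiA)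
  have FS: "F (r *s x) = r *s F x" for r x by (simp add: F_def rsharp_sc phiS)
  have hyG: "hom_yb br \<phi> R a b c = G (axis a 1) (axis b 1) (axis c 1)" if c1: "C1" for a b c
  proof -
    have sF: "rsharp R (dual_map \<phi> (axis i 1)) = F (axis i 1)" for i
      using c1 by (simp add: C1_def F_def)
    show ?thesis
      unfolding coef_identity[OF hl assms(3)] sF G_def pairing_axis1
      using anti[of "F (axis c 1)" "F (axis a 1)"] by simp
  qed
  have cycG: "B (\<phi> x) (br y z) + B (\<phi> y) (br z x) + B (\<phi> z) (br x y) = G (T x) (T y) (T z)"
    if c2: "C2" for x y z
  proof -
    have e: "B (\<phi> u) (br v w) = pairing (T u) (br (F (T v)) (F (T w)))" for u v w
    proof -
      have "B (\<phi> u) (br v w) = B u (\<phi> (br v w))" using c2 by (simp add: C2_def)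
      also have "\<dots> = pairing (T u) (br (\<phi> v) (\<phi> w))" by (simp add: Bd hom)
      also have "\<dots> = pairing (T u) (br (F (T v)) (F (T w)))" by (simp add: F_def ST)
      finally show ?thesis .
    qed
    show ?thesis unfolding e G_def ..
  qed
  have GA1: "G (x + y) v w = G x v w + G y v w" for x y v w
    by (simp add: G_def FA brA1 brA2 pairing_add1 pairing_add2 algebra_simps)
  have GA2: "G u (x + y) w = G u x w + G u y w" for x y u w
    by (simp add: G_def FA brA1 brA2 pairing_add1 pairing_add2 algebra_simps)
  have GA3: "G u v (x + y) = G u v x + G u v y" for x y u v
    by (simp add: G_def FA brA1 brA2 pairing_add1 pairing_add2 algebra_simps)
  have GS1: "G (r *s x) v w = r * G x v w" for r x v w
    by (simp add: G_def FS brS1 brS2 pairing_sc1 pairing_sc2 algebra_simps)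
  have GS2: "G u (r *s x) w = r * G u x w" for r x u w
    by (simp add: G_def FS brS1 brS2 pairing_sc1 pairing_sc2 algebra_simps)
  have GS3: "G u v (r *s x) = r * G u v x" for r x u v
    by (simp add: G_def FS brS1 brS2 pairing_sc1 pairing_sc2 algebra_simps)
  have Gzero: "G u v w = 0" if H: "\<forall>a b c. G (axis a 1) (axis b 1) (axis c 1) = 0" for u v w
  proof -
    have s1: "G u' (axis b 1) (axis c 1) = 0" for u' b c
      by (rule lin_zero[where g="\<lambda>u. G u (axis b 1) (axis c 1)"]) (simp_all add: GA1 GS1 H)
    have s2: "G u' v' (axis c 1) = 0" for u' v' c
      by (rule lin_zero[where g="\<lambda>v. G u' v (axis c 1)"]) (simp_all add: GA2 GS2 s1)
    show ?thesis
      by (rule lin_zero[where g="\<lambda>w. G u v w"]) (simp_all add: GA3 GS3 s2)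
  qed
  show ?thesis
  proof (cases C1)
    case True
    have c2: C2 using C12[OF True] .
    have "(\<forall>a b c. hom_yb br \<phi> R a b c = 0) \<longleftrightarrow> (\<forall>u v w. G u v w = 0)"
      using hyG[OF True] Gzero by auto
    moreover have "(\<forall>x y z. B (\<phi> x) (br y z) + B (\<phi> y) (br z x) + B (\<phi> z) (br x y) = 0)
        \<longleftrightarrow> (\<forall>u v w. G u v w = 0)"
    proof
      assume L: "\<forall>x y z. B (\<phi> x) (br y z) + B (\<phi> y) (br z x) + B (\<phi> z) (br x y) = 0"
      show "\<forall>u v w. G u v w = 0"
      proof (intro allI)
        fix u v w
        have "G u v w = G (T (rsharp R u)) (T (rsharp R v)) (T (rsharp R w))" by (simp add: TS)
        also have "\<dots> = 0" using cycG[OF c2, of "rsharp R u" "rsharp R v" "rsharp R w"] L by simp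
        finally show "G u v w = 0" .
      qed
    next
      assume "\<forall>u v w. G u v w = 0"
      then show "\<forall>x y z. B (\<phi> x) (br y z) + B (\<phi> y) (br z x) + B (\<phi> z) (br x y) = 0"
        using cycG[OF c2] by simp
    qed
    ultimately show ?thesis using True c2 unfolding C1_def C2_def by simp
  next
    case False
    then have "\<not> C2" using C21 by blast
    then show ?thesis using False unfolding C1_def C2_def by blast
  qed
qed

end
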